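(* Let $G=(V,E,m,w)$ be a weighted graph admitting an intrinsic metric $\rho$ with finite balls and finite jump size $s=\sup_{x\sim y}\rho(x,y)$. Suppose $G$ has polynomial volume growth: there are $x_0\in V$ and constants $\alpha, C$ with $m(B_R(x_0))\le C(1+R)^{\alpha}$ for all $R>0$. Let $k>0$ and $u\in\mathcal{P}_k(G)$. Then for any $q\in\mathbb{N}$ with $4q>2k+\alpha+2$, $\partial_t^q u\equiv 0$. In particular, there exist functions $p_i$ on $V$, $0\le i\le q-1$, such that $u(x,t)=\sum_{i=0}^{q-1}p_i(x)t^i$.
   Context: A weighted graph $G=(V,E,m,w)$ consists of a locally finite, simple, undirected, connected graph $(V,E)$, a symmetric edge weight $w:E\to(0,\infty)$, and a vertex weight $m:V\to(0,\infty)$; $m(\Omega)=\sum_{x\in\Omega}m_x$. The Laplacian is $\Delta f(x)=\sum_{y\sim x}\frac{w_{xy}}{m_x}(f(y)-f(x))$. A (pseudo)metric $\rho$ on $V$ is intrinsic if $\sum_{y\sim x}w_{xy}\rho^2(x,y)\le m_x$ for all $x$; $B_R(x)=\{y:\rho(y,x)\le R\}$. An ancient solution is a function $u(x,t)$ on $V\times(-\infty,0]$, (infinitely) differentiable in $t$, with $\partial_t u=\Delta u$. $\mathcal{P}_k(G)$ is the space of ancient solutions $u$ for which there are $x_0\in V$ and $C_u$ with $\sup_{B_R(x_0)\times[-R^2,0]}|u|\le C_u(1+R)^k$ for all $R>0$. *)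

theory Defs
  imports "HOL-Analysis.Analysis"
begin

text \<open>Weighted graph on the vertex type 'v (V = UNIV). adj is the edge relation,
  w the edge weight, m the vertex weight.\<close>
definition weighted_graph ::
  "('v \<Rightarrow> 'v \<Rightarrow> bool) \<Rightarrow> ('v \<Rightarrow> 'v \<Rightarrow> real) \<Rightarrow> ('v \<Rightarrow> real) \<Rightarrow> bool" where
  "weighted_graph adj w m \<longleftrightarrow>
     (\<forall>x. \<not> adj x x) \<and>
     (\<forall>x y. adj x y \<longrightarrow> adj y x) \<and>
     (\<forall>x. finite {y. adj x y}) \<and>
     (\<forall>x y. adj\<^sup>*\<^sup>* x y) \<and>
     (\<forall>x y. adj x y \<longrightarrow> w x y = w y x \<and> w x y > 0) \<and>
     (\<forall>x. m x > 0)"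

definition vol :: "('v \<Rightarrow> real) \<Rightarrow> 'v set \<Rightarrow> real" where
  "vol m A = (\<Sum>x\<in>A. m x)"

definition laplacian ::
  "('v \<Rightarrow> 'v \<Rightarrow> bool) \<Rightarrow> ('v \<Rightarrow> 'v \<Rightarrow> real) \<Rightarrow> ('v \<Rightarrow> real) \<Rightarrow> ('v \<Rightarrow> real) \<Rightarrow> 'v \<Rightarrow> real" where
  "laplacian adj w m f x = (\<Sum>y\<in>{y. adj x y}. w x y / m x * (f y - f x))"

definition pseudometric :: "('v \<Rightarrow> 'v \<Rightarrow> real) \<Rightarrow> bool" where
  "pseudometric \<rho> \<longleftrightarrow>
     (\<forall>x y. \<rho> x y \<ge> 0) \<and> (\<forall>x. \<rho> x x = 0) \<and> (\<forall>x y. \<rho> x y = \<rho> y x) \<and>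
     (\<forall>x y z. \<rho> x z \<le> \<rho> x y + \<rho> y z)"

definition intrinsic ::
  "('v \<Rightarrow> 'v \<Rightarrow> bool) \<Rightarrow> ('v \<Rightarrow> 'v \<Rightarrow> real) \<Rightarrow> ('v \<Rightarrow> real) \<Rightarrow> ('v \<Rightarrow> 'v \<Rightarrow> real) \<Rightarrow> bool" where
  "intrinsic adj w m \<rho> \<longleftrightarrow> pseudometric \<rho> \<and>
     (\<forall>x. (\<Sum>y\<in>{y. adj x y}. w x y * (\<rho> x y)\<^sup>2) \<le> m x)"

definition ball_rho :: "('v \<Rightarrow> 'v \<Rightarrow> real) \<Rightarrow> 'v \<Rightarrow> real \<Rightarrow> 'v set" where
  "ball_rho \<rho> x R = {y. \<rho> y x \<le> R}"

definition time_derivs :: "('v \<Rightarrow> real \<Rightarrow> real) \<Rightarrow> (nat \<Rightarrow> 'v \<Rightarrow> real \<Rightarrow> real) \<Rightarrow> bool" where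
  "time_derivs u D \<longleftrightarrow>
     (\<forall>x t. t \<le> 0 \<longrightarrow> D 0 x t = u x t) \<and>
     (\<forall>n x t. t \<le> 0 \<longrightarrow>
        ((D n x) has_real_derivative D (Suc n) x t) (at t within {..0}))"

definition ancient_solution ::
  "('v \<Rightarrow> 'v \<Rightarrow> bool) \<Rightarrow> ('v \<Rightarrow> 'v \<Rightarrow> real) \<Rightarrow> ('v \<Rightarrow> real) \<Rightarrow> ('v \<Rightarrow> real \<Rightarrow> real) \<Rightarrow> bool" where
  "ancient_solution adj w m u \<longleftrightarrow>
     (\<exists>D. time_derivs u D \<and>
        (\<forall>x t. t \<le> 0 \<longrightarrow> D 1 x t = laplacian adj w m (\<lambda>y. u y t) x))"

definition poly_growth_ancient ::
  "('v \<Rightarrow> 'v \<Rightarrow> bool) \<Rightarrow> ('v \<Rightarrow> 'v \<Rightarrow> real) \<Rightarrow> ('v \<Rightarrow> real) \<Rightarrow> ('v \<Rightarrow> 'v \<Rightarrow> real)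
    \<Rightarrow> real \<Rightarrow> ('v \<Rightarrow> real \<Rightarrow> real) \<Rightarrow> bool" where
  "poly_growth_ancient adj w m \<rho> k u \<longleftrightarrow> ancient_solution adj w m u \<and>
     (\<exists>x0 Cu. \<forall>R>0. \<forall>y t. y \<in> ball_rho \<rho> x0 R \<and> - (R\<^sup>2) \<le> t \<and> t \<le> 0
          \<longrightarrow> \<bar>u y t\<bar> \<le> Cu * (1 + R) powr k)"

end

theory Submission
  imports Defs
begin



lemma time_lemma:
  fixes F F' X Y :: "real \<Rightarrow> real" and a c :: real
  assumes a: "a > 0" and c: "c > 0"
    and dF: "\<And>t. t \<le> 0 \<Longrightarrow> (F has_real_derivative F' t) (at t within {..0})"
    and cX: "continuous_on {..0} X" and cY: "continuous_on {..0} Y"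
    and Fnn: "\<And>t. t \<le> 0 \<Longrightarrow> F t \<ge> 0"
    and Xnn: "\<And>t. t \<le> 0 \<Longrightarrow> X t \<ge> 0"
    and Ynn: "\<And>t. t \<le> 0 \<Longrightarrow> Y t \<ge> 0"
    and ineq: "\<And>t. t \<le> 0 \<Longrightarrow> X t \<le> - c * F' t + Y t"
  shows "integral {-a..0} X \<le> c / a * integral {-2*a..-a} F + integral {-2*a..0} Y"
proof -
  have cF: "continuous_on {..0} F"
    unfolding continuous_on_eq_continuous_within
    using DERIV_continuous[OF dF] by auto
  have sub1: "{-2*a..-a} \<subseteq> {..0}" using a by auto
  obtain t0 where t0: "t0 \<in> {-2*a..-a}" and t0min: "\<And>t. t \<in> {-2*a..-a} \<Longrightarrow> F t0 \<le> F t"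
    using continuous_attains_inf[of "{-2*a..-a}" F] continuous_on_subset[OF cF sub1] a by auto
  have intF: "F integrable_on {-2*a..-a}"
    by (rule integrable_continuous_interval, rule continuous_on_subset[OF cF sub1])
  have "integral {-2*a..-a} (\<lambda>_. F t0) \<le> integral {-2*a..-a} F"
    by (rule integral_le[OF _ intF]) (use t0min in auto)
  then have Ft0: "a * F t0 \<le> integral {-2*a..-a} F" using a by simp
  have t0le: "t0 \<le> 0" "-2*a \<le> t0" "t0 \<le> -a" using t0 a by auto
  have FTC: "(F' has_integral (F 0 - F t0)) {t0..0}"
  proof (rule fundamental_theorem_of_calculus)
    show "t0 \<le> 0" by fact
    fix t assume "t \<in> {t0..0}"
    then have "t \<le> 0" by auto
    from DERIV_subset[OF dF[OF this], of "{t0..0}"]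
    show "(F has_vector_derivative F' t) (at t within {t0..0})"
      by (auto simp: has_real_derivative_iff_has_vector_derivative)
  qed
  have sub2: "{t0..0} \<subseteq> {..0}" by auto
  have intY: "Y integrable_on {t0..0}"
    by (rule integrable_continuous_interval, rule continuous_on_subset[OF cY sub2])
  have intX: "X integrable_on {t0..0}"
    by (rule integrable_continuous_interval, rule continuous_on_subset[OF cX sub2])
  have sub3: "{-2*a..0} \<subseteq> {..0}" by auto
  have intY2: "Y integrable_on {-2*a..0}"
    by (rule integrable_continuous_interval, rule continuous_on_subset[OF cY sub3])
  have intXa: "X integrable_on {-a..0}"
    by (rule integrable_continuous_interval, rule continuous_on_subset[OF cX]) auto
  have h: "((\<lambda>t. - c * F' t + Y t) has_integral (- c * (F 0 - F t0) + integral {t0..0} Y)) {t0..0}"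
    by (intro has_integral_add has_integral_mult_right integrable_integral intY FTC)
  have "integral {-a..0} X \<le> integral {t0..0} X"
    by (rule integral_subset_le) (use t0le intXa intX Xnn in auto)
  also have "\<dots> \<le> - c * (F 0 - F t0) + integral {t0..0} Y"
    by (rule has_integral_le[OF integrable_integral[OF intX] h]) (use ineq in auto)
  also have "\<dots> \<le> c * F t0 + integral {-2*a..0} Y"
  proof -
    have "integral {t0..0} Y \<le> integral {-2*a..0} Y"
      by (rule integral_subset_le) (use t0le intY intY2 Ynn in auto)
    moreover have "c * F 0 \<ge> 0" using Fnn c by auto
    ultimately show ?thesis by (simp add: algebra_simps)
  qed
  also have "\<dots> \<le> c / a * integral {-2*a..-a} F + integral {-2*a..0} Y"
  proof -
    have "c * F t0 = c / a * (a * F t0)" using a by simp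
    also have "\<dots> \<le> c / a * integral {-2*a..-a} F"
      by (rule mult_left_mono[OF Ft0]) (use a c in auto)
    finally show ?thesis by simp
  qed
  finally show ?thesis .
qed




definition Pr :: "('v \<Rightarrow> 'v \<Rightarrow> bool) \<Rightarrow> 'v set \<Rightarrow> ('v \<Rightarrow> 'v \<Rightarrow> real) \<Rightarrow> real" where
  "Pr adj S F = (\<Sum>p\<in>Sigma S (\<lambda>x. {y\<in>S. adj x y}). F (fst p) (snd p))"

lemma Pr_add: "Pr adj S (\<lambda>x y. F x y + G x y) = Pr adj S F + Pr adj S G"
  unfolding Pr_def by (simp add: sum.distrib)

lemma Pr_diff: "Pr adj S (\<lambda>x y. F x y - G x y) = Pr adj S F - Pr adj S G"
  unfolding Pr_def by (simp add: sum_subtractf)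

lemma Pr_cmult: "Pr adj S (\<lambda>x y. c * F x y) = c * Pr adj S F"
  unfolding Pr_def by (simp add: sum_distrib_left)

lemma Pr_mono: "(\<And>x y. x \<in> S \<Longrightarrow> y \<in> S \<Longrightarrow> adj x y \<Longrightarrow> F x y \<le> G x y) \<Longrightarrow> Pr adj S F \<le> Pr adj S G"
  unfolding Pr_def by (rule sum_mono) auto

lemma Pr_cong: "(\<And>x y. x \<in> S \<Longrightarrow> y \<in> S \<Longrightarrow> adj x y \<Longrightarrow> F x y = G x y) \<Longrightarrow> Pr adj S F = Pr adj S G"
  unfolding Pr_def by (rule sum.cong) auto

lemma Pr_nonneg: "(\<And>x y. x \<in> S \<Longrightarrow> y \<in> S \<Longrightarrow> adj x y \<Longrightarrow> 0 \<le> F x y) \<Longrightarrow> 0 \<le> Pr adj S F"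
  unfolding Pr_def by (rule sum_nonneg) auto

lemma Pr_swap:
  assumes "\<And>x y. adj x y \<Longrightarrow> adj y x"
  shows "Pr adj S F = Pr adj S (\<lambda>x y. F y x)"
  unfolding Pr_def
  by (rule sum.reindex_bij_witness[of _ prod.swap prod.swap]) (auto intro: assms)

lemma Pr_iter:
  assumes "finite S"
  shows "Pr adj S F = (\<Sum>x\<in>S. \<Sum>y\<in>{y\<in>S. adj x y}. F x y)"
  unfolding Pr_def using assms by (subst sum.Sigma) (auto simp: split_def)

lemma sq_sum_le: "(x + y)^2 \<le> 2 * (x^2 + y^2)" for x y :: real
proof -
  have "(x+y)^2 = 2*(x^2+y^2) - (x-y)^2" by (simp add: power2_eq_square algebra_simps)
  then show ?thesis by simp
qed

lemma alg1:
  fixes a b va vb L r :: real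
  assumes "0 \<le> a" "0 \<le> b" "\<bar>b - a\<bar> \<le> L * r" "0 \<le> L" "0 \<le> r"
  shows "(a^2 + b^2)/2 * (vb - va)^2 \<le> 2 * ((b^2 * vb - a^2 * va) * (vb - va)) + 2 * L^2 * r^2 * (va^2 + vb^2)"
proof -
  define A where "A = (a + b) * (vb - va)"
  define B where "B = (b - a) * (va + vb)"
  have e: "(b^2 * vb - a^2 * va) * (vb - va) = (a^2+b^2)/2 * (vb - va)^2 + A * B / 2"
    unfolding A_def B_def by (simp add: field_simps power2_eq_square)
  have ba: "(b-a)^2 \<le> (L*r)^2" using assms(3) by (simp add: abs_le_square_iff[symmetric])
  have "B^2 = (b-a)^2 * (va+vb)^2" unfolding B_def by (simp add: power_mult_distrib)
  also have "\<dots> \<le> (L*r)^2 * (va+vb)^2"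
    by (rule mult_right_mono[OF ba]) simp
  also have "\<dots> \<le> (L*r)^2 * (2*(va^2+vb^2))"
    by (rule mult_left_mono[OF sq_sum_le]) simp
  finally have B2: "B^2 \<le> 2 * L^2 * r^2 * (va^2+vb^2)" by (simp add: power_mult_distrib algebra_simps)
  have A2: "A^2 \<le> 2 * (a^2+b^2) * (vb-va)^2"
    using mult_right_mono[OF sq_sum_le[of a b], of "(vb-va)^2"] unfolding A_def by (simp add: power_mult_distrib)
  have "0 \<le> (A/2 + B)^2" by simp
  then have "0 \<le> A^2/4 + A*B + B^2" by (simp add: power2_eq_square algebra_simps)
  moreover have "2 * ((b^2 * vb - a^2 * va) * (vb - va)) = (a^2+b^2) * (vb-va)^2 + A*B" using e by simp
  ultimately show ?thesis using A2 B2 by (simp add: algebra_simps)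
qed

lemma alg2:
  fixes a b ra rb va vb fa fb L r :: real
  assumes "0 \<le> a" "0 \<le> b" "\<bar>b - a\<bar> \<le> L * r" "0 \<le> L" "0 \<le> r"
    and "a \<noteq> 0 \<Longrightarrow> fa = 1" "b \<noteq> 0 \<Longrightarrow> fb = 1"
  shows "- ((b - a) * (b * rb + a * ra) * (vb - va)) \<le>
     r^2 * (a^2 * ra^2 + b^2 * rb^2) / 2 + 2 * L^2 * ((fa^2 + fb^2)/2) * (vb - va)^2"
proof -
  define A where "A = b * rb + a * ra"
  define d where "d = vb - va"
  have Q: "0 \<le> r^2 * (a^2 * ra^2 + b^2 * rb^2) / 2 + 2 * L^2 * ((fa^2 + fb^2)/2) * d^2"
    by (intro add_nonneg_nonneg mult_nonneg_nonneg divide_nonneg_nonneg) auto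
  show ?thesis
  proof (cases "a = 0 \<and> b = 0")
    case True
    then show ?thesis using Q unfolding d_def by simp
  next
    case False
    then have "fa = 1 \<or> fb = 1" using assms(6,7) by auto
    then have f1: "1 \<le> fa^2 + fb^2" by (auto simp: add_increasing add_increasing2)
    have A2: "A^2 \<le> 2 * (a^2 * ra^2 + b^2 * rb^2)"
      unfolding A_def using sq_sum_le[of "b*rb" "a*ra"] by (simp add: power_mult_distrib)
    have "- ((b - a) * A * d) \<le> \<bar>b - a\<bar> * \<bar>A\<bar> * \<bar>d\<bar>" by (simp add: abs_mult[symmetric])
    also have "\<dots> \<le> (L*r) * \<bar>A\<bar> * \<bar>d\<bar>"
      by (intro mult_right_mono assms) auto
    also have "\<dots> \<le> r^2 * A^2 / 4 + L^2 * d^2"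
    proof -
      have "0 \<le> (r * \<bar>A\<bar> / 2 - L * \<bar>d\<bar>)^2" by simp
      then show ?thesis by (simp add: power2_eq_square algebra_simps)
    qed
    also have "\<dots> \<le> r^2 * (a^2 * ra^2 + b^2 * rb^2) / 2 + 2 * L^2 * ((fa^2 + fb^2)/2) * d^2"
    proof -
      have h1: "r^2 * A^2 / 4 \<le> r^2 * (a^2 * ra^2 + b^2 * rb^2) / 2"
        using mult_left_mono[OF A2, of "r^2"] by (simp add: algebra_simps)
      have "L^2 * d^2 * 1 \<le> L^2 * d^2 * (fa^2+fb^2)"
        using f1 by (intro mult_left_mono) auto
      then have h2: "L^2 * d^2 \<le> 2 * L^2 * ((fa^2 + fb^2)/2) * d^2" by (simp add: algebra_simps)
      show ?thesis by (rule add_mono[OF h1 h2])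
    qed
    finally show ?thesis unfolding A_def d_def .
  qed
qed




lemma Pr_minus: "Pr adj S (\<lambda>x y. - F x y) = - Pr adj S F"
  unfolding Pr_def by (simp add: sum_negf)

locale wg =
  fixes adj :: "'v \<Rightarrow> 'v \<Rightarrow> bool" and w :: "'v \<Rightarrow> 'v \<Rightarrow> real" and m :: "'v \<Rightarrow> real"
    and \<rho> :: "'v \<Rightarrow> 'v \<Rightarrow> real"
  assumes sym: "\<And>x y. adj x y \<Longrightarrow> adj y x"
    and wsym: "\<And>x y. adj x y \<Longrightarrow> w x y = w y x"
    and wpos: "\<And>x y. adj x y \<Longrightarrow> w x y > 0"
    and mpos: "\<And>x. m x > 0"
    and finN: "\<And>x. finite {y. adj x y}"
    and intr: "\<And>x. (\<Sum>y\<in>{y. adj x y}. w x y * (\<rho> x y)\<^sup>2) \<le> m x"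
    and rsym: "\<And>x y. \<rho> x y = \<rho> y x"
    and rnn: "\<And>x y. \<rho> x y \<ge> 0"
begin

lemma green:
  assumes S: "finite S" and supp: "\<And>x. f x \<noteq> 0 \<Longrightarrow> x \<in> S \<and> {y. adj x y} \<subseteq> S"
  shows "(\<Sum>x\<in>S. m x * (f x * laplacian adj w m g x)) =
     - (1/2) * Pr adj S (\<lambda>x y. w x y * (f y - f x) * (g y - g x))"
proof -
  have a: "m x * (f x * laplacian adj w m g x) = (\<Sum>y\<in>{y\<in>S. adj x y}. w x y * f x * (g y - g x))"
    if "x \<in> S" for x
  proof (cases "f x = 0")
    case True then show ?thesis by simp
  next
    case False
    then have sub: "{y\<in>S. adj x y} = {y. adj x y}" using supp by auto
    have "m x * (f x * laplacian adj w m g x) = (\<Sum>y\<in>{y. adj x y}. m x * (f x * (w x y / m x * (g y - g x))))"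
      by (simp add: laplacian_def sum_distrib_left)
    also have "\<dots> = (\<Sum>y\<in>{y. adj x y}. w x y * f x * (g y - g x))"
      using mpos[of x] by (intro sum.cong) (auto simp: field_simps)
    finally show ?thesis by (simp add: sub)
  qed
  have A: "(\<Sum>x\<in>S. m x * (f x * laplacian adj w m g x)) = Pr adj S (\<lambda>x y. w x y * f x * (g y - g x))"
    unfolding Pr_iter[OF S] by (rule sum.cong) (auto simp: a)
  have B: "Pr adj S (\<lambda>x y. w x y * f x * (g y - g x)) = - Pr adj S (\<lambda>x y. w x y * f y * (g y - g x))"
  proof -
    have "Pr adj S (\<lambda>x y. w x y * f x * (g y - g x)) = Pr adj S (\<lambda>x y. w y x * f y * (g x - g y))"
      by (rule Pr_swap[OF sym])
    also have "\<dots> = Pr adj S (\<lambda>x y. - (w x y * f y * (g y - g x)))"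
      by (rule Pr_cong) (frule wsym; simp add: algebra_simps)
    finally show ?thesis by (simp add: Pr_minus)
  qed
  have C: "Pr adj S (\<lambda>x y. w x y * (f y - f x) * (g y - g x)) =
      Pr adj S (\<lambda>x y. w x y * f y * (g y - g x)) - Pr adj S (\<lambda>x y. w x y * f x * (g y - g x))"
    by (subst Pr_diff[symmetric]) (rule Pr_cong, simp add: algebra_simps)
  show ?thesis using A B C by simp
qed

lemma intr_bound:
  assumes S: "finite S" and g: "\<And>x. x \<in> S \<Longrightarrow> g x \<ge> 0"
  shows "Pr adj S (\<lambda>x y. w x y * (\<rho> x y)^2 * g x) \<le> (\<Sum>x\<in>S. m x * g x)"
proof -
  have "Pr adj S (\<lambda>x y. w x y * (\<rho> x y)^2 * g x) = (\<Sum>x\<in>S. g x * (\<Sum>y\<in>{y\<in>S. adj x y}. w x y * (\<rho> x y)^2))"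
    unfolding Pr_iter[OF S] by (simp add: sum_distrib_left algebra_simps)
  also have "\<dots> \<le> (\<Sum>x\<in>S. g x * m x)"
  proof (rule sum_mono)
    fix x assume x: "x \<in> S"
    have "(\<Sum>y\<in>{y\<in>S. adj x y}. w x y * (\<rho> x y)^2) \<le> (\<Sum>y\<in>{y. adj x y}. w x y * (\<rho> x y)^2)"
      by (rule sum_mono2[OF finN]) (auto intro: mult_nonneg_nonneg less_imp_le[OF wpos])
    also have "\<dots> \<le> m x" by (rule intr)
    finally show "g x * (\<Sum>y\<in>{y\<in>S. adj x y}. w x y * (\<rho> x y)^2) \<le> g x * m x"
      by (rule mult_left_mono) (use g x in auto)
  qed
  finally show ?thesis by (simp add: algebra_simps)
qed

lemma intr_bound2:
  assumes S: "finite S" and g: "\<And>x. x \<in> S \<Longrightarrow> g x \<ge> 0"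
  shows "Pr adj S (\<lambda>x y. w x y * (\<rho> x y)^2 * g y) \<le> (\<Sum>x\<in>S. m x * g x)"
proof -
  have "Pr adj S (\<lambda>x y. w x y * (\<rho> x y)^2 * g y) = Pr adj S (\<lambda>x y. w y x * (\<rho> y x)^2 * g x)"
    by (rule Pr_swap[OF sym])
  also have "\<dots> = Pr adj S (\<lambda>x y. w x y * (\<rho> x y)^2 * g x)"
    by (rule Pr_cong) (frule wsym; simp add: rsym)
  finally show ?thesis using intr_bound[OF assms] by simp
qed

lemma step1:
  fixes V \<phi> :: "'v \<Rightarrow> real" and L :: real
  assumes S: "finite S" and L: "L \<ge> 0" and phi_nn: "\<And>x. 0 \<le> \<phi> x"
    and lip: "\<And>x y. adj x y \<Longrightarrow> \<bar>\<phi> y - \<phi> x\<bar> \<le> L * \<rho> x y"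
    and supp: "\<And>x. \<phi> x \<noteq> 0 \<Longrightarrow> x \<in> S \<and> {y. adj x y} \<subseteq> S"
  shows "Pr adj S (\<lambda>x y. w x y * ((\<phi> x^2 + \<phi> y^2)/2 * (V y - V x)^2)) \<le>
     -2 * (\<Sum>x\<in>S. m x * (\<phi> x^2 * (2 * V x * laplacian adj w m V x))) + 4 * L^2 * (\<Sum>x\<in>S. m x * (V x)^2)"
proof -
  define f where "f x = \<phi> x^2 * V x" for x
  have fs: "f x \<noteq> 0 \<Longrightarrow> x \<in> S \<and> {y. adj x y} \<subseteq> S" for x
    using supp[of x] unfolding f_def by auto
  have g: "(\<Sum>x\<in>S. m x * (f x * laplacian adj w m V x)) = - (1/2) * Pr adj S (\<lambda>x y. w x y * (f y - f x) * (V y - V x))"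
    by (rule green[OF S fs])
  have "(\<Sum>x\<in>S. m x * (\<phi> x^2 * (2 * V x * laplacian adj w m V x))) = 2 * (\<Sum>x\<in>S. m x * (f x * laplacian adj w m V x))"
    unfolding f_def sum_distrib_left by (rule sum.cong) (auto simp: algebra_simps)
  then have Q: "-2 * (\<Sum>x\<in>S. m x * (\<phi> x^2 * (2 * V x * laplacian adj w m V x))) = 2 * Pr adj S (\<lambda>x y. w x y * (f y - f x) * (V y - V x))"
    using g by simp
  have "Pr adj S (\<lambda>x y. w x y * ((\<phi> x^2 + \<phi> y^2)/2 * (V y - V x)^2)) \<le>
     Pr adj S (\<lambda>x y. w x y * (2 * ((\<phi> y^2 * V y - \<phi> x^2 * V x) * (V y - V x)) + 2 * L^2 * (\<rho> x y)^2 * (V x^2 + V y^2)))"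
  proof (rule Pr_mono)
    fix x y assume "adj x y"
    then show "w x y * ((\<phi> x^2 + \<phi> y^2)/2 * (V y - V x)^2) \<le>
     w x y * (2 * ((\<phi> y^2 * V y - \<phi> x^2 * V x) * (V y - V x)) + 2 * L^2 * (\<rho> x y)^2 * (V x^2 + V y^2))"
      by (intro mult_left_mono alg1 phi_nn lip L rnn less_imp_le[OF wpos])
  qed
  also have "\<dots> = Pr adj S (\<lambda>x y. 2 * (w x y * (f y - f x) * (V y - V x)) +
       (2 * L^2 * (w x y * (\<rho> x y)^2 * (V x)^2) + 2 * L^2 * (w x y * (\<rho> x y)^2 * (V y)^2)))"
    by (rule Pr_cong) (simp add: f_def algebra_simps)
  also have "\<dots> = 2 * Pr adj S (\<lambda>x y. w x y * (f y - f x) * (V y - V x)) +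
       (2 * L^2 * Pr adj S (\<lambda>x y. w x y * (\<rho> x y)^2 * (V x)^2) + 2 * L^2 * Pr adj S (\<lambda>x y. w x y * (\<rho> x y)^2 * (V y)^2))"
    by (simp only: Pr_add Pr_cmult)
  also have "\<dots> \<le> 2 * Pr adj S (\<lambda>x y. w x y * (f y - f x) * (V y - V x)) +
       (2 * L^2 * (\<Sum>x\<in>S. m x * (V x)^2) + 2 * L^2 * (\<Sum>x\<in>S. m x * (V x)^2))"
    by (intro add_left_mono add_mono mult_left_mono intr_bound intr_bound2 S) auto
  finally show ?thesis using Q by simp
qed

lemma step2:
  fixes V \<phi> \<psi> :: "'v \<Rightarrow> real" and L :: real
  assumes S: "finite S" and L: "L \<ge> 0" and psi_nn: "\<And>x. 0 \<le> \<psi> x"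
    and lip: "\<And>x y. adj x y \<Longrightarrow> \<bar>\<psi> y - \<psi> x\<bar> \<le> L * \<rho> x y"
    and phi_nn: "\<And>x. 0 \<le> \<phi> x"
    and supp: "\<And>x. \<psi> x \<noteq> 0 \<Longrightarrow> x \<in> S \<and> {y. adj x y} \<subseteq> S \<and> \<phi> x = 1"
  defines "R \<equiv> laplacian adj w m V"
  shows "(\<Sum>x\<in>S. m x * (\<psi> x^2 * (R x)^2)) \<le>
     -(1/2) * Pr adj S (\<lambda>x y. w x y * (\<psi> x * \<psi> y) * (2 * (V y - V x) * (R y - R x)))
     + 2 * L^2 * Pr adj S (\<lambda>x y. w x y * ((\<phi> x^2 + \<phi> y^2)/2 * (V y - V x)^2))"
proof -
  define f where "f x = \<psi> x^2 * R x" for x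
  define X where "X = (\<Sum>x\<in>S. m x * (\<psi> x^2 * (R x)^2))"
  define G where "G = Pr adj S (\<lambda>x y. w x y * ((\<phi> x^2 + \<phi> y^2)/2 * (V y - V x)^2))"
  define P1 where "P1 = Pr adj S (\<lambda>x y. w x y * (\<psi> x * \<psi> y) * ((R y - R x) * (V y - V x)))"
  define P2 where "P2 = Pr adj S (\<lambda>x y. w x y * ((\<psi> y - \<psi> x) * (\<psi> y * R y + \<psi> x * R x) * (V y - V x)))"
  have fs: "f x \<noteq> 0 \<Longrightarrow> x \<in> S \<and> {y. adj x y} \<subseteq> S" for x
    using supp[of x] unfolding f_def by auto
  have "X = (\<Sum>x\<in>S. m x * (f x * laplacian adj w m V x))"
    unfolding X_def f_def R_def by (rule sum.cong) (auto simp: power2_eq_square)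
  also have "\<dots> = - (1/2) * Pr adj S (\<lambda>x y. w x y * (f y - f x) * (V y - V x))"
    by (rule green[OF S fs])
  also have "Pr adj S (\<lambda>x y. w x y * (f y - f x) * (V y - V x)) = P1 + P2"
    unfolding P1_def P2_def by (subst Pr_add[symmetric]) (rule Pr_cong, simp add: f_def algebra_simps power2_eq_square)
  finally have X1: "X = -(1/2) * P1 - (1/2) * P2" by (simp add: algebra_simps)
  have "- P2 = Pr adj S (\<lambda>x y. w x y * (- ((\<psi> y - \<psi> x) * (\<psi> y * R y + \<psi> x * R x) * (V y - V x))))"
    unfolding P2_def by (subst Pr_minus[symmetric]) (rule Pr_cong, simp)
  also have "\<dots> \<le> Pr adj S (\<lambda>x y. w x y * ((\<rho> x y)^2 * ((\<psi> x)^2 * (R x)^2 + (\<psi> y)^2 * (R y)^2) / 2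
      + 2 * L^2 * (((\<phi> x)^2 + (\<phi> y)^2)/2) * (V y - V x)^2))"
  proof (rule Pr_mono)
    fix x y assume xy: "adj x y"
    show "w x y * (- ((\<psi> y - \<psi> x) * (\<psi> y * R y + \<psi> x * R x) * (V y - V x))) \<le>
      w x y * ((\<rho> x y)^2 * ((\<psi> x)^2 * (R x)^2 + (\<psi> y)^2 * (R y)^2) / 2
      + 2 * L^2 * (((\<phi> x)^2 + (\<phi> y)^2)/2) * (V y - V x)^2)"
      by (intro mult_left_mono alg2 psi_nn lip xy L rnn less_imp_le[OF wpos]) (use supp in auto)
  qed
  also have "\<dots> = (1/2) * Pr adj S (\<lambda>x y. w x y * (\<rho> x y)^2 * ((\<psi> x)^2 * (R x)^2))
      + (1/2) * Pr adj S (\<lambda>x y. w x y * (\<rho> x y)^2 * ((\<psi> y)^2 * (R y)^2)) + 2 * L^2 * G"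
    unfolding G_def by (simp only: Pr_add[symmetric] Pr_cmult[symmetric]) (rule Pr_cong, simp add: algebra_simps)
  also have "\<dots> \<le> (1/2) * X + (1/2) * X + 2 * L^2 * G"
    unfolding X_def
    by (intro add_mono mult_left_mono intr_bound intr_bound2 S order_refl) auto
  finally have P2b: "- P2 \<le> X + 2 * L^2 * G" by simp
  have "Pr adj S (\<lambda>x y. w x y * (\<psi> x * \<psi> y) * (2 * (V y - V x) * (R y - R x))) = 2 * P1"
    unfolding P1_def by (subst Pr_cmult[symmetric]) (rule Pr_cong, simp add: algebra_simps)
  then show ?thesis using X1 P2b unfolding X_def[symmetric] G_def[symmetric] by simp
qed

end



lemma deriv_sq:
  assumes "(f has_real_derivative f') (at t within S)"
  shows "((\<lambda>t. c * (f t)^2) has_real_derivative c * (2 * f t * f')) (at t within S)"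
  using DERIV_cmult[OF DERIV_power[OF assms, of 2], of c]
  by (rule DERIV_cong) (simp add: algebra_simps)

lemma deriv_sq_diff:
  assumes "(f has_real_derivative f') (at t within S)" "(g has_real_derivative g') (at t within S)"
  shows "((\<lambda>t. c * (f t - g t)^2) has_real_derivative c * (2 * (f t - g t) * (f' - g'))) (at t within S)"
  using DERIV_cmult[OF DERIV_power[OF DERIV_diff[OF assms], of 2], of c]
  by (rule DERIV_cong) (simp add: algebra_simps)

lemma cont_integrable:
  fixes f :: "real \<Rightarrow> real"
  assumes "continuous_on {..0} f" "b \<le> 0"
  shows "f integrable_on {a..b}"
  by (rule integrable_continuous_interval, rule continuous_on_subset[OF assms(1)]) (use assms in auto)

lemma prod_le_avg: "a * b \<le> (a^2 + b^2) / 2" for a b :: real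
proof -
  have "0 \<le> (a - b)^2" by simp
  then show ?thesis by (simp add: power2_eq_square algebra_simps)
qed

lemma clamp_lip: "\<bar>max 0 (min 1 a) - max 0 (min 1 a')\<bar> \<le> \<bar>a - a'\<bar>" for a a' :: real
  by (simp add: max_def min_def abs_if)

locale wgs = wg adj w m \<rho> for adj :: "'v \<Rightarrow> 'v \<Rightarrow> bool" and w m \<rho> +
  fixes D :: "nat \<Rightarrow> 'v \<Rightarrow> real \<Rightarrow> real" and x0 :: 'v and s :: real
  assumes der: "\<And>n x t. t \<le> 0 \<Longrightarrow> (D n x has_real_derivative D (Suc n) x t) (at t within {..0})"
    and heat: "\<And>n x t. t \<le> 0 \<Longrightarrow> D (Suc n) x t = laplacian adj w m (\<lambda>y. D n y t) x"
    and tri: "\<And>x y z. \<rho> x z \<le> \<rho> x y + \<rho> y z"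
    and fin_ball: "\<And>R. finite (ball_rho \<rho> x0 R)"
    and jump: "\<And>x y. adj x y \<Longrightarrow> \<rho> x y \<le> s"
    and s0: "s \<ge> 0"
begin

definition I :: "nat \<Rightarrow> real \<Rightarrow> real \<Rightarrow> real" where
  "I n b r = integral {-b..0} (\<lambda>t. \<Sum>x\<in>ball_rho \<rho> x0 r. m x * (D n x t)^2)"

lemma contD: "continuous_on {..0} (D n x)"
  unfolding continuous_on_eq_continuous_within
  using DERIV_continuous[OF der] by auto

lemma lap_eq: "t \<le> 0 \<Longrightarrow> laplacian adj w m (\<lambda>y. D n y t) = (\<lambda>x. D (Suc n) x t)"
  using heat by auto

lemma rho_diff: "\<bar>\<rho> y x0 - \<rho> x x0\<bar> \<le> \<rho> x y"
  using tri[where x=y and y=x and z=x0] tri[where x=x and y=y and z=x0] rsym[of x y] by auto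

lemma m_nn: "0 \<le> m x" using mpos[of x] by simp

lemma w_nn: "adj x y \<Longrightarrow> 0 \<le> w x y" using wpos[of x y] by simp

lemma Cacc:
  assumes b: "b > 0"
  shows "I (Suc n) b r \<le> 25 / (2 * b^2) * I n (4*b) (r + 2 * sqrt b + s)"
proof -
  define l where "l = sqrt b"
  have l: "l > 0" "l^2 = b" using b unfolding l_def by auto
  define L where "L = 1 / l"
  have L: "L \<ge> 0" "L^2 = 1/b" using l unfolding L_def by (auto simp: power_divide)
  define h where "h c d = max 0 (min 1 (1 - (d - c) / l))" for c d :: real
  have h01: "0 \<le> h c d" "h c d \<le> 1" for c d unfolding h_def by auto
  have hlip: "\<bar>h c d - h c d'\<bar> \<le> L * \<bar>d - d'\<bar>" for c d d'
  proof -
    have "\<bar>h c d - h c d'\<bar> \<le> \<bar>(1 - (d - c) / l) - (1 - (d' - c) / l)\<bar>"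
      unfolding h_def by (rule clamp_lip)
    also have "(1 - (d - c) / l) - (1 - (d' - c) / l) = L * (d' - d)"
      using l unfolding L_def by (simp add: field_simps)
    also have "\<bar>L * (d' - d)\<bar> = L * \<bar>d - d'\<bar>" using L(1) by (simp add: abs_mult abs_minus_commute)
    finally show ?thesis .
  qed
  have h1: "d \<le> c \<Longrightarrow> h c d = 1" for c d using l unfolding h_def by (auto simp: field_simps)
  have hnz: "h c d \<noteq> 0 \<Longrightarrow> d < c + l" for c d
  proof (rule ccontr)
    assume "h c d \<noteq> 0" "\<not> d < c + l"
    then have "1 - (d - c) / l \<le> 0" using l by (auto simp: field_simps)
    then show False using \<open>h c d \<noteq> 0\<close> unfolding h_def by auto
  qed
  define \<psi> where "\<psi> x = h r (\<rho> x x0)" for x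
  define \<phi> where "\<phi> x = h (r + l) (\<rho> x x0)" for x
  define S where "S = ball_rho \<rho> x0 (r + 2 * l + s)"
  have S: "finite S" unfolding S_def by (rule fin_ball)
  have psi01: "0 \<le> \<psi> x" "\<psi> x \<le> 1" for x unfolding \<psi>_def using h01 by auto
  have phi01: "0 \<le> \<phi> x" "\<phi> x \<le> 1" for x unfolding \<phi>_def using h01 by auto
  have psilip: "\<bar>\<psi> y - \<psi> x\<bar> \<le> L * \<rho> x y" for x y
    unfolding \<psi>_def using hlip[of r "\<rho> y x0" "\<rho> x x0"] mult_left_mono[OF rho_diff[of y x] L(1)] by linarith
  have philip: "\<bar>\<phi> y - \<phi> x\<bar> \<le> L * \<rho> x y" for x y
    unfolding \<phi>_def using hlip[of "r+l" "\<rho> y x0" "\<rho> x x0"] mult_left_mono[OF rho_diff[of y x] L(1)] by linarith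
  have nbr: "{y. adj x y} \<subseteq> S" if "\<rho> x x0 < r + 2 * l" for x
  proof
    fix y assume "y \<in> {y. adj x y}"
    then have "\<rho> y x \<le> s" using jump[of x y] rsym[of x y] by auto
    then have "\<rho> y x0 \<le> r + 2 * l + s" using tri[where x=y and y=x and z=x0] that by linarith
    then show "y \<in> S" unfolding S_def ball_rho_def by auto
  qed
  have phisupp: "\<phi> x \<noteq> 0 \<Longrightarrow> x \<in> S \<and> {y. adj x y} \<subseteq> S" for x
  proof -
    assume "\<phi> x \<noteq> 0"
    then have "\<rho> x x0 < r + 2 * l" using hnz unfolding \<phi>_def by fastforce
    then show ?thesis using nbr[of x] s0 unfolding S_def ball_rho_def by auto
  qed
  have psisupp: "\<psi> x \<noteq> 0 \<Longrightarrow> x \<in> S \<and> {y. adj x y} \<subseteq> S \<and> \<phi> x = 1" for x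
  proof -
    assume "\<psi> x \<noteq> 0"
    then have "\<rho> x x0 < r + l" using hnz unfolding \<psi>_def by fastforce
    then show ?thesis using nbr[of x] s0 l h1[of "\<rho> x x0" "r + l"] unfolding S_def ball_rho_def \<phi>_def by auto
  qed
  have psi1: "x \<in> ball_rho \<rho> x0 r \<Longrightarrow> \<psi> x = 1" for x
    unfolding \<psi>_def ball_rho_def using h1 by auto
  have Br: "ball_rho \<rho> x0 r \<subseteq> S" unfolding S_def ball_rho_def using l s0 by auto
  have psiphi: "\<psi> x \<le> \<phi> x" for x using psisupp[of x] psi01[of x] phi01[of x] by (cases "\<psi> x = 0") auto

  define Q where "Q t = (\<Sum>x\<in>S. (m x * \<phi> x^2) * (D n x t)^2)" for t
  define Q' where "Q' t = (\<Sum>x\<in>S. (m x * \<phi> x^2) * (2 * D n x t * D (Suc n) x t))" for t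
  define M where "M t = (\<Sum>x\<in>S. m x * (D n x t)^2)" for t
  define Gt where "Gt t = Pr adj S (\<lambda>x y. w x y * ((\<phi> x^2 + \<phi> y^2)/2 * (D n y t - D n x t)^2))" for t
  define Gp where "Gp t = Pr adj S (\<lambda>x y. (w x y * (\<psi> x * \<psi> y)) * (D n y t - D n x t)^2)" for t
  define Gp' where "Gp' t = Pr adj S (\<lambda>x y. (w x y * (\<psi> x * \<psi> y)) * (2 * (D n y t - D n x t) * (D (Suc n) y t - D (Suc n) x t)))" for t
  define X where "X t = (\<Sum>x\<in>S. m x * (\<psi> x^2 * (D (Suc n) x t)^2))" for t

  have dQ: "(Q has_real_derivative Q' t) (at t within {..0})" if "t \<le> 0" for t
    unfolding Q_def Q'_def by (intro DERIV_sum deriv_sq der that)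
  have dGp: "(Gp has_real_derivative Gp' t) (at t within {..0})" if "t \<le> 0" for t
    unfolding Gp_def Gp'_def Pr_def by (intro DERIV_sum deriv_sq_diff der that)
  have cM: "continuous_on {..0} M" unfolding M_def by (intro continuous_intros contD)
  have cX: "continuous_on {..0} X" unfolding X_def by (intro continuous_intros contD)
  have cGt: "continuous_on {..0} Gt" unfolding Gt_def Pr_def by (intro continuous_intros contD)
  have cGp: "continuous_on {..0} Gp" unfolding Gp_def Pr_def by (intro continuous_intros contD)
  have cQ: "continuous_on {..0} Q" unfolding Q_def by (intro continuous_intros contD)
  have Mnn: "0 \<le> M t" for t unfolding M_def by (intro sum_nonneg mult_nonneg_nonneg m_nn) auto
  have Xnn: "0 \<le> X t" for t unfolding X_def by (intro sum_nonneg mult_nonneg_nonneg m_nn) auto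
  have Qnn: "0 \<le> Q t" for t unfolding Q_def by (intro sum_nonneg mult_nonneg_nonneg m_nn) auto
  have Gtnn: "0 \<le> Gt t" for t unfolding Gt_def
    by (intro Pr_nonneg mult_nonneg_nonneg w_nn divide_nonneg_nonneg add_nonneg_nonneg) auto
  have Gpnn: "0 \<le> Gp t" for t unfolding Gp_def
    by (intro Pr_nonneg mult_nonneg_nonneg w_nn psi01) auto
  have QM: "Q t \<le> M t" for t unfolding Q_def M_def
  proof (rule sum_mono)
    fix x
    have "\<phi> x^2 \<le> 1" using phi01[of x] by (simp add: abs_square_le_1)
    then have "(m x * \<phi> x^2) * (D n x t)^2 \<le> (m x * 1) * (D n x t)^2"
      by (intro mult_right_mono mult_left_mono m_nn) auto
    then show "(m x * \<phi> x^2) * (D n x t)^2 \<le> m x * (D n x t)^2" by simp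
  qed
  have GpGt: "Gp t \<le> Gt t" for t unfolding Gp_def Gt_def
  proof (rule Pr_mono)
    fix x y assume "adj x y"
    have "\<psi> x * \<psi> y \<le> (\<psi> x^2 + \<psi> y^2)/2"
      by (rule prod_le_avg)
    also have "\<dots> \<le> (\<phi> x^2 + \<phi> y^2)/2"
      using power_mono[OF psiphi[of x] psi01(1)[of x], of 2] power_mono[OF psiphi[of y] psi01(1)[of y], of 2]
      by simp
    finally have "w x y * (\<psi> x * \<psi> y) * (D n y t - D n x t)^2 \<le> w x y * ((\<phi> x^2 + \<phi> y^2)/2) * (D n y t - D n x t)^2"
      by (intro mult_right_mono mult_left_mono w_nn \<open>adj x y\<close>) auto
    then show "(w x y * (\<psi> x * \<psi> y)) * (D n y t - D n x t)^2 \<le> w x y * ((\<phi> x^2 + \<phi> y^2)/2 * (D n y t - D n x t)^2)"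
      by (simp add: algebra_simps)
  qed
  have ineq1: "Gt t \<le> - 2 * Q' t + 4 * L^2 * M t" if t: "t \<le> 0" for t
  proof -
    have "Gt t \<le> -2 * (\<Sum>x\<in>S. m x * (\<phi> x^2 * (2 * D n x t * laplacian adj w m (\<lambda>y. D n y t) x))) + 4 * L^2 * M t"
      unfolding Gt_def M_def
      by (rule step1[OF S L(1) phi01(1) philip phisupp, of "\<lambda>y. D n y t"])
    also have "(\<Sum>x\<in>S. m x * (\<phi> x^2 * (2 * D n x t * laplacian adj w m (\<lambda>y. D n y t) x))) = Q' t"
      unfolding Q'_def lap_eq[OF t] by (simp add: algebra_simps)
    finally show ?thesis .
  qed
  have ineq2: "X t \<le> - (1/2) * Gp' t + 2 * L^2 * Gt t" if t: "t \<le> 0" for t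
  proof -
    have "X t \<le> -(1/2) * Pr adj S (\<lambda>x y. w x y * (\<psi> x * \<psi> y) * (2 * (D n y t - D n x t) *
          (laplacian adj w m (\<lambda>y. D n y t) y - laplacian adj w m (\<lambda>y. D n y t) x)))
       + 2 * L^2 * Gt t"
      unfolding X_def Gt_def
      using step2[OF S L(1) psi01(1) psilip phi01(1) psisupp, of "\<lambda>y. D n y t"] lap_eq[OF t]
      by simp
    also have "Pr adj S (\<lambda>x y. w x y * (\<psi> x * \<psi> y) * (2 * (D n y t - D n x t) *
          (laplacian adj w m (\<lambda>y. D n y t) y - laplacian adj w m (\<lambda>y. D n y t) x))) = Gp' t"
      unfolding Gp'_def lap_eq[OF t] by simp
    finally show ?thesis .
  qed
  have T1: "integral {-(2*b)..0} Gt \<le> 2 / (2*b) * integral {-2*(2*b)..-(2*b)} Q + integral {-2*(2*b)..0} (\<lambda>t. 4 * L^2 * M t)"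
    by (rule time_lemma[where F'=Q']) (use b dQ cGt cM Qnn Gtnn Mnn ineq1 in \<open>auto intro!: continuous_intros mult_nonneg_nonneg\<close>)
  define IM where "IM = integral {-(4*b)..0} M"
  have IMnn: "0 \<le> IM" unfolding IM_def by (rule integral_nonneg[OF cont_integrable[OF cM]]) (auto simp: Mnn)
  have "integral {-2*(2*b)..-(2*b)} Q \<le> integral {-2*(2*b)..-(2*b)} M"
    by (rule integral_le[OF cont_integrable[OF cQ] cont_integrable[OF cM]]) (use b QM in auto)
  also have "\<dots> \<le> IM" unfolding IM_def
    by (rule integral_subset_le[OF _ cont_integrable[OF cM] cont_integrable[OF cM]]) (use b Mnn in auto)
  finally have QIM: "integral {-2*(2*b)..-(2*b)} Q \<le> IM" .
  have GtIM: "integral {-(2*b)..0} Gt \<le> 5 / b * IM"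
  proof -
    have "integral {-2*(2*b)..0} (\<lambda>t. 4 * L^2 * M t) = 4 / b * IM" unfolding IM_def using L by simp
    moreover have "2 / (2*b) * integral {-2*(2*b)..-(2*b)} Q \<le> 1 / b * IM"
      using mult_left_mono[OF QIM, of "1/b"] b by simp
    moreover have "5/b*IM = 4/b*IM + 1/b*IM" by (simp add: field_simps)
    ultimately show ?thesis using T1 by linarith
  qed
  have T2: "integral {-b..0} X \<le> (1/2) / b * integral {-2*b..-b} Gp + integral {-2*b..0} (\<lambda>t. 2 * L^2 * Gt t)"
    by (rule time_lemma[where F'=Gp']) (use b dGp cX cGt Gpnn Xnn Gtnn ineq2 in \<open>auto intro!: continuous_intros mult_nonneg_nonneg\<close>)
  have "integral {-2*b..-b} Gp \<le> integral {-2*b..-b} Gt"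
    by (rule integral_le[OF cont_integrable[OF cGp] cont_integrable[OF cGt]]) (use b GpGt in auto)
  also have "\<dots> \<le> integral {-(2*b)..0} Gt"
    by (rule integral_subset_le[OF _ cont_integrable[OF cGt] cont_integrable[OF cGt]]) (use b Gtnn in auto)
  finally have GpGt2: "integral {-2*b..-b} Gp \<le> integral {-(2*b)..0} Gt" .
  have XIM: "integral {-b..0} X \<le> 25 / (2 * b^2) * IM"
  proof -
    have "integral {-b..0} X \<le> (1/2) / b * integral {-(2*b)..0} Gt + 2 / b * integral {-(2*b)..0} Gt"
      using T2 mult_left_mono[OF GpGt2, of "(1/2)/b"] b L by simp
    also have "\<dots> = 5 / (2*b) * integral {-(2*b)..0} Gt" using b by (simp add: field_simps)
    also have "\<dots> \<le> 5 / (2*b) * (5 / b * IM)"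
      by (rule mult_left_mono[OF GtIM]) (use b in auto)
    also have "\<dots> = 25 / (2 * b^2) * IM" by (simp add: power2_eq_square)
    finally show ?thesis .
  qed
  have LX: "I (Suc n) b r \<le> integral {-b..0} X"
    unfolding I_def
  proof (rule integral_le)
    show "(\<lambda>t. \<Sum>x\<in>ball_rho \<rho> x0 r. m x * (D (Suc n) x t)^2) integrable_on {-b..0}"
      by (rule cont_integrable) (auto intro!: continuous_intros contD)
    show "X integrable_on {-b..0}" by (rule cont_integrable[OF cX]) auto
    fix t
    have "(\<Sum>x\<in>ball_rho \<rho> x0 r. m x * (D (Suc n) x t)^2) = (\<Sum>x\<in>ball_rho \<rho> x0 r. m x * (\<psi> x^2 * (D (Suc n) x t)^2))"
      by (rule sum.cong) (auto simp: psi1)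
    also have "\<dots> \<le> X t" unfolding X_def
      by (rule sum_mono2[OF S Br]) (auto intro!: mult_nonneg_nonneg m_nn)
    finally show "(\<Sum>x\<in>ball_rho \<rho> x0 r. m x * (D (Suc n) x t)^2) \<le> X t" .
  qed
  have "IM = I n (4*b) (r + 2 * sqrt b + s)" unfolding IM_def I_def M_def S_def l_def by simp
  then show ?thesis using LX XIM by simp
qed

end




context wgs
begin

lemma Inn: "b \<ge> 0 \<Longrightarrow> 0 \<le> I n b r"
  unfolding I_def
  by (rule integral_nonneg, rule cont_integrable) (auto intro!: continuous_intros contD sum_nonneg mult_nonneg_nonneg m_nn)

lemma iter:
  "b > 0 \<Longrightarrow> I q b r \<le> 13^q / b^(2*q) * I 0 (4^q * b) (r + (2^(q+1) - 2) * sqrt b + real q * s)"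
proof (induction q arbitrary: b r)
  case 0
  then show ?case by simp
next
  case (Suc q)
  define r1 where "r1 = r + 2 * sqrt b + s"
  have b: "b > 0" by fact
  have IH: "I q (4*b) r1 \<le> 13^q / (4*b)^(2*q) * I 0 (4^q * (4*b)) (r1 + (2^(q+1) - 2) * sqrt (4*b) + real q * s)"
    using Suc.IH[of "4*b" r1] b by simp
  have s4: "sqrt (4*b) = 2 * sqrt b" by (simp add: real_sqrt_mult)
  have rad: "r1 + (2^(q+1) - 2) * sqrt (4*b) + real q * s = r + (2^(Suc q+1) - 2) * sqrt b + real (Suc q) * s"
    unfolding r1_def s4 by (simp add: algebra_simps)
  have tm: "4^q * (4*b) = 4^(Suc q) * b" by simp
  define J where "J = I 0 (4^(Suc q) * b) (r + (2^(Suc q+1) - 2) * sqrt b + real (Suc q) * s)"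
  have Jnn: "0 \<le> J" unfolding J_def by (rule Inn) (use b in auto)
  have "I (Suc q) b r \<le> 25 / (2 * b^2) * I q (4*b) r1" unfolding r1_def by (rule Cacc[OF b])
  also have "\<dots> \<le> 25 / (2 * b^2) * (13^q / (4*b)^(2*q) * J)"
    using IH unfolding rad tm J_def by (intro mult_left_mono) (use b in auto)
  also have "\<dots> \<le> 13^(Suc q) / b^(2 * Suc q) * J"
  proof -
    have "(4*b)^(2*q) \<ge> b^(2*q)" by (rule power_mono) (use b in auto)
    then have "13^q / (4*b)^(2*q) \<le> 13^q / b^(2*q)"
      by (intro divide_left_mono) (use b in auto)
    moreover have "25 / (2 * b^2) \<le> 13 / b^2" using b by (simp add: field_simps)
    ultimately have "25 / (2 * b^2) * (13^q / (4*b)^(2*q)) \<le> 13 / b^2 * (13^q / b^(2*q))"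
      by (intro mult_mono) (use b in auto)
    also have "\<dots> = 13^(Suc q) / b^(2 * Suc q)" by (simp add: power_add field_simps power2_eq_square)
    finally show ?thesis using Jnn by (metis mult.assoc mult_right_mono)
  qed
  finally show ?case unfolding J_def .
qed

lemma I0_bound:
  assumes R: "R > 0" and tau: "0 \<le> \<tau>" "\<tau> \<le> R^2" and rr: "r' \<le> R"
    and growth: "\<And>y t. y \<in> ball_rho \<rho> x0 R \<Longrightarrow> - (R^2) \<le> t \<Longrightarrow> t \<le> 0 \<Longrightarrow> \<bar>D 0 y t\<bar> \<le> K"
  shows "I 0 \<tau> r' \<le> \<tau> * (vol m (ball_rho \<rho> x0 R) * K^2)"
proof -
  have sub: "ball_rho \<rho> x0 r' \<subseteq> ball_rho \<rho> x0 R" using rr unfolding ball_rho_def by auto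
  have "I 0 \<tau> r' \<le> integral {-\<tau>..0} (\<lambda>_. vol m (ball_rho \<rho> x0 R) * K^2)"
    unfolding I_def
  proof (rule integral_le)
    show "(\<lambda>t. \<Sum>x\<in>ball_rho \<rho> x0 r'. m x * (D 0 x t)^2) integrable_on {-\<tau>..0}"
      by (rule cont_integrable) (auto intro!: continuous_intros contD)
    show "(\<lambda>_. vol m (ball_rho \<rho> x0 R) * K^2) integrable_on {-\<tau>..0}" by (rule integrable_const_ivl)
    fix t assume t: "t \<in> {-\<tau>..0}"
    have "(\<Sum>x\<in>ball_rho \<rho> x0 r'. m x * (D 0 x t)^2) \<le> (\<Sum>x\<in>ball_rho \<rho> x0 R. m x * (D 0 x t)^2)"
      by (rule sum_mono2[OF fin_ball sub]) (auto intro!: mult_nonneg_nonneg m_nn)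
    also have "\<dots> \<le> (\<Sum>x\<in>ball_rho \<rho> x0 R. m x * K^2)"
    proof (rule sum_mono)
      fix y assume y: "y \<in> ball_rho \<rho> x0 R"
      have "\<bar>D 0 y t\<bar> \<le> K" using growth[OF y] t tau by auto
      then have "(D 0 y t)^2 \<le> K^2"
        by (metis abs_ge_zero abs_le_square_iff abs_of_nonneg order_trans)
      then show "m y * (D 0 y t)^2 \<le> m y * K^2" by (intro mult_left_mono m_nn)
    qed
    also have "\<dots> = vol m (ball_rho \<rho> x0 R) * K^2" unfolding vol_def by (simp add: sum_distrib_right)
    finally show "(\<Sum>x\<in>ball_rho \<rho> x0 r'. m x * (D 0 x t)^2) \<le> vol m (ball_rho \<rho> x0 R) * K^2" .
  qed
  also have "\<dots> = \<tau> * (vol m (ball_rho \<rho> x0 R) * K^2)" using tau by simp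
  finally show ?thesis .
qed

end



context wgs
begin

lemma vanish:
  fixes Cu C k \<alpha> :: real and q :: nat and x :: 'v and t :: real
  assumes growth: "\<And>R y t. R > 0 \<Longrightarrow> y \<in> ball_rho \<rho> x0 R \<Longrightarrow> -(R^2) \<le> t \<Longrightarrow> t \<le> 0 \<Longrightarrow> \<bar>D 0 y t\<bar> \<le> Cu * (1+R) powr k"
    and volg: "\<And>R. R > 0 \<Longrightarrow> vol m (ball_rho \<rho> x0 R) \<le> C * (1+R) powr \<alpha>"
    and k: "k \<ge> 0" and q: "4 * real q > 2*k + \<alpha> + 2" and t: "t \<le> 0"
  shows "D q x t = 0"
proof -
  define r0 where "r0 = \<rho> x x0"
  have x_in: "x \<in> ball_rho \<rho> x0 r0" by (simp add: ball_rho_def r0_def)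
  have r0: "r0 \<ge> 0" unfolding r0_def by (rule rnn)
  have volnn: "0 \<le> vol m A" for A unfolding vol_def by (intro sum_nonneg m_nn)
  have C0: "C \<ge> 0"
  proof -
    have "0 \<le> C * (1+1) powr \<alpha>" using volg[of 1] volnn[of "ball_rho \<rho> x0 1"] by simp
    moreover have "(1+1::real) powr \<alpha> > 0" by simp
    ultimately show ?thesis by (simp add: zero_le_mult_iff)
  qed
  define J where "J b = integral {-b..0} (\<lambda>t. (D q x t)^2)" for b
  have cDq: "continuous_on {..0} (\<lambda>t. (D q x t)^2)" by (intro continuous_intros contD)
  define A where "A = 1 + r0 + real q * s + 2^(q+1)"
  have A1: "A \<ge> 1" unfolding A_def using r0 s0 by simp
  define Aa where "Aa = max 1 (A powr \<alpha>)"
  define e where "e = 2 + \<alpha> + 2*k - 4 * real q"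
  define K0 where "K0 = 13^q * 4^q * (C * Aa) * (Cu^2 * A powr (2*k))"
  have key: "m x * J (\<sigma>^2) \<le> K0 * \<sigma> powr e" if \<sigma>: "\<sigma> \<ge> 1" for \<sigma>
  proof -
    define b where "b = \<sigma>^2"
    have b: "b > 0" "sqrt b = \<sigma>" unfolding b_def using \<sigma> by auto
    have "m x * J b = integral {-b..0} (\<lambda>t. m x * (D q x t)^2)" unfolding J_def by simp
    also have "\<dots> \<le> I q b r0" unfolding I_def
    proof (rule integral_le)
      show "(\<lambda>t. m x * (D q x t)^2) integrable_on {-b..0}"
        by (rule cont_integrable) (auto intro!: continuous_intros contD)
      show "(\<lambda>t. \<Sum>x\<in>ball_rho \<rho> x0 r0. m x * (D q x t)^2) integrable_on {-b..0}"
        by (rule cont_integrable) (auto intro!: continuous_intros contD)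
      fix t
      show "m x * (D q x t)^2 \<le> (\<Sum>x\<in>ball_rho \<rho> x0 r0. m x * (D q x t)^2)"
        by (rule member_le_sum[OF x_in _ fin_ball]) (auto intro!: mult_nonneg_nonneg m_nn)
    qed
    also have "\<dots> \<le> 13^q / b^(2*q) * I 0 (4^q * b) (r0 + (2^(q+1) - 2) * sqrt b + real q * s)"
      by (rule iter[OF b(1)])
    finally have s1: "m x * J b \<le> 13^q / b^(2*q) * I 0 (4^q * b) (r0 + (2^(q+1) - 2) * \<sigma> + real q * s)"
      using b by simp
    define R where "R = r0 + real q * s + 2^(q+1) * \<sigma>"
    have R: "R > 0" unfolding R_def using r0 s0 \<sigma> by (intro add_nonneg_pos mult_pos_pos) auto
    have tauR: "4^q * b \<le> R^2"
    proof -
      have f4: "(2::real)^q * 2^q = 4^q" by (simp add: power_mult_distrib[symmetric])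
      have "4^q * b = (2^q * \<sigma>)^2" unfolding b_def f4[symmetric] by (simp add: power2_eq_square algebra_simps)
      also have "\<dots> \<le> R^2"
      proof (rule power_mono)
        show "2^q * \<sigma> \<le> R" unfolding R_def using r0 s0 \<sigma> by simp
      qed (use \<sigma> in simp)
      finally show ?thesis .
    qed
    have rr: "r0 + (2^(q+1) - 2) * \<sigma> + real q * s \<le> R" unfolding R_def using \<sigma> by simp
    define K where "K = Cu * (1+R) powr k"
    have s2: "I 0 (4^q * b) (r0 + (2^(q+1) - 2) * \<sigma> + real q * s) \<le> (4^q * b) * (vol m (ball_rho \<rho> x0 R) * K^2)"
      by (rule I0_bound[OF R _ tauR rr]) (use b growth[OF R] in \<open>auto simp: K_def\<close>)
    also have "\<dots> \<le> (4^q * b) * ((C * (1+R) powr \<alpha>) * K^2)"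
      by (intro mult_left_mono mult_right_mono volg R) (use b in auto)
    also have "\<dots> \<le> (4^q * b) * ((C * (Aa * \<sigma> powr \<alpha>)) * (Cu^2 * (A powr (2*k) * \<sigma> powr (2*k))))"
    proof -
      have "(1::real) \<le> 2 * 2^q" using one_le_power[of "2::real" q] by linarith
      then have ss: "\<sigma> \<le> \<sigma> * (2 * 2^q)" using mult_left_mono[of 1 "2 * 2^q" \<sigma>] \<sigma> by simp
      have qs: "0 \<le> real q * s" using s0 by simp
      have e1: "2^(q+1) * \<sigma> = \<sigma> * (2 * 2^q)" by simp
      have e2: "A * \<sigma> = \<sigma> + r0 * \<sigma> + real q * s * \<sigma> + 2^(q+1) * \<sigma>" by (simp add: A_def algebra_simps)
      have i1: "r0 \<le> r0 * \<sigma>" using mult_left_mono[OF \<sigma> r0] by simp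
      have i2: "real q * s \<le> real q * s * \<sigma>" using mult_left_mono[OF \<sigma> qs] by simp
      have R1: "1 + R \<le> A * \<sigma>" "\<sigma> \<le> 1 + R"
        unfolding R_def using e1 e2 i1 i2 ss qs r0 \<sigma> by linarith+
      have p1: "(1+R) powr \<alpha> \<le> Aa * \<sigma> powr \<alpha>"
      proof (cases "\<alpha> \<ge> 0")
        case True
        have "(1+R) powr \<alpha> \<le> (A * \<sigma>) powr \<alpha>" by (rule powr_mono2[OF True _ R1(1)]) (use R in auto)
        also have "\<dots> = A powr \<alpha> * \<sigma> powr \<alpha>" by (rule powr_mult)
        also have "\<dots> \<le> Aa * \<sigma> powr \<alpha>" unfolding Aa_def by (intro mult_right_mono) auto
        finally show ?thesis .
      next
        case False
        have "(1+R) powr \<alpha> \<le> \<sigma> powr \<alpha>" by (rule powr_mono2'[OF _ _ R1(2)]) (use False \<sigma> in auto)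
        also have "\<dots> \<le> Aa * \<sigma> powr \<alpha>" unfolding Aa_def using mult_right_mono[of 1 "max 1 (A powr \<alpha>)" "\<sigma> powr \<alpha>"] by simp
        finally show ?thesis .
      qed
      have p2: "K^2 \<le> Cu^2 * (A powr (2*k) * \<sigma> powr (2*k))"
      proof -
        have "K^2 = Cu^2 * ((1+R) powr k)^2" unfolding K_def by (simp add: power_mult_distrib)
        also have "((1+R) powr k)^2 = (1+R) powr (2*k)" using R by (subst powr_power) auto
        also have "(1+R) powr (2*k) \<le> (A * \<sigma>) powr (2*k)" by (rule powr_mono2) (use k R R1 in auto)
        also have "\<dots> = A powr (2*k) * \<sigma> powr (2*k)" by (rule powr_mult)
        finally show ?thesis by (simp add: mult_left_mono)
      qed
      have "(C * (1+R) powr \<alpha>) * K^2 \<le> (C * (Aa * \<sigma> powr \<alpha>)) * (Cu^2 * (A powr (2*k) * \<sigma> powr (2*k)))"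
        by (intro mult_mono mult_left_mono p1 p2 C0) (auto intro!: mult_nonneg_nonneg C0 simp: Aa_def)
      then show ?thesis by (intro mult_left_mono) (use b in auto)
    qed
    finally have s3: "I 0 (4^q * b) (r0 + (2^(q+1) - 2) * \<sigma> + real q * s) \<le>
        (4^q * b) * ((C * (Aa * \<sigma> powr \<alpha>)) * (Cu^2 * (A powr (2*k) * \<sigma> powr (2*k))))" .
    have "m x * J b \<le> 13^q / b^(2*q) * ((4^q * b) * ((C * (Aa * \<sigma> powr \<alpha>)) * (Cu^2 * (A powr (2*k) * \<sigma> powr (2*k)))))"
      using s1 mult_left_mono[OF s3, of "13^q / b^(2*q)"] b by simp
    also have "\<dots> = K0 * \<sigma> powr e"
    proof -
      have sp: "\<sigma> > 0" using \<sigma> by simp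
      have "\<sigma> powr e = \<sigma> powr (2 + \<alpha> + 2*k) / \<sigma> powr (4 * real q)" unfolding e_def by (rule powr_diff)
      also have "\<sigma> powr (2 + \<alpha> + 2*k) = \<sigma> powr 2 * \<sigma> powr \<alpha> * \<sigma> powr (2*k)" by (simp add: powr_add)
      also have "\<sigma> powr 2 = \<sigma>^2" using sp by (simp add: powr_numeral)
      also have "\<sigma> powr (4 * real q) = \<sigma>^(4*q)" using sp powr_realpow[OF sp, of "4*q"] by simp
      finally have pe: "\<sigma> powr e = \<sigma>^2 * \<sigma> powr \<alpha> * \<sigma> powr (2*k) / \<sigma>^(4*q)" .
      have bq: "b^(2*q) = \<sigma>^(4*q)" unfolding b_def by (simp add: power_mult[symmetric])
      show ?thesis unfolding pe bq K0_def unfolding b_def by (simp add: mult_ac divide_inverse)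
    qed
    finally show ?thesis unfolding b_def .
  qed
  define b0 where "b0 = 1 - t"
  have b0: "b0 \<ge> 1" "-b0 \<le> t" unfolding b0_def using t by auto
  have Jnn: "0 \<le> J b0" unfolding J_def
    by (rule integral_nonneg[OF cont_integrable[OF cDq]]) auto
  have Jmono: "J b0 \<le> J (\<sigma>^2)" if "\<sigma> \<ge> b0" for \<sigma>
  proof -
    have "\<sigma> * 1 \<le> \<sigma> * \<sigma>" by (rule mult_left_mono) (use that b0 in auto)
    then have "b0 \<le> \<sigma>^2" using that by (simp add: power2_eq_square)
    then show ?thesis unfolding J_def
      by (intro integral_subset_le cont_integrable[OF cDq]) auto
  qed
  have "J b0 \<le> 0"
  proof (rule ccontr)
    assume "\<not> J b0 \<le> 0"
    then have pos: "m x * J b0 > 0" using mpos[of x] by simp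
    have e: "e < 0" unfolding e_def using q by simp
    have "((\<lambda>\<sigma>. K0 * \<sigma> powr e) \<longlongrightarrow> K0 * 0) at_top"
      by (intro tendsto_mult tendsto_const tendsto_neg_powr[OF e] filterlim_ident)
    then have "eventually (\<lambda>\<sigma>. K0 * \<sigma> powr e < m x * J b0) at_top"
      using pos by (intro order_tendstoD(2)) auto
    moreover have "eventually (\<lambda>\<sigma>. \<sigma> \<ge> b0) at_top" by (rule eventually_ge_at_top)
    ultimately have "eventually (\<lambda>\<sigma>. K0 * \<sigma> powr e < m x * J b0 \<and> \<sigma> \<ge> b0) at_top"
      by (rule eventually_conj)
    then obtain \<sigma> where "K0 * \<sigma> powr e < m x * J b0" "\<sigma> \<ge> b0"
      by (auto simp: eventually_at_top_linorder)
    moreover have "m x * J b0 \<le> m x * J (\<sigma>^2)"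
      using Jmono[OF \<open>\<sigma> \<ge> b0\<close>] mpos[of x] by simp
    moreover have "m x * J (\<sigma>^2) \<le> K0 * \<sigma> powr e" using key[of \<sigma>] \<open>\<sigma> \<ge> b0\<close> b0 by simp
    ultimately show False by simp
  qed
  then have J0: "J b0 = 0" using Jnn by simp
  have c1: "continuous_on (cbox (-b0) 0) (\<lambda>t. (D q x t)^2)"
    by (rule continuous_on_subset[OF cDq]) auto
  have c2: "((\<lambda>t. (D q x t)^2) has_integral 0) (cbox (-b0) 0)"
    using J0 integrable_integral[OF cont_integrable[OF cDq], of 0 "-b0"] unfolding J_def by simp
  have c3: "box (-b0) 0 \<noteq> {}" using b0 by auto
  have c4: "t \<in> cbox (-b0) 0" using b0 t by auto
  have "(D q x t)^2 = 0"
    using has_integral_0_cbox_imp_0[where f="\<lambda>t. (D q x t)^2" and a="-b0" and b=0 and x=t] c1 c2 c3 c4 by auto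
  then show ?thesis by simp
qed

end



lemma notbot_le0: "t \<le> 0 \<Longrightarrow> at t within {..(0::real)} \<noteq> bot"
proof -
  assume t: "t \<le> 0"
  have "t islimpt {..(0::real)}"
    unfolding islimpt_approachable_real
  proof (intro allI impI)
    fix e :: real assume e: "e > 0"
    show "\<exists>s\<in>{..0}. s \<noteq> t \<and> \<bar>s - t\<bar> < e"
      by (rule bexI[of _ "t - e/2"]) (use t e in auto)
  qed
  then show ?thesis using trivial_limit_within by blast
qed

lemma deriv_unique_le0:
  assumes "t \<le> 0" "(f has_real_derivative a) (at t within {..0})" "(f has_real_derivative b) (at t within {..0})"
  shows "a = b"
  using vector_derivative_unique_within[OF notbot_le0[OF assms(1)]] assms(2,3)
  by (auto simp: has_real_derivative_iff_has_vector_derivative)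

lemma deriv_transform_le0:
  assumes "(f has_real_derivative a) (at t within {..0})" "t \<le> 0" "\<And>s. s \<le> 0 \<Longrightarrow> f s = g s"
  shows "(g has_real_derivative a) (at t within {..0})"
  by (rule has_field_derivative_transform_within[OF assms(1), of 1]) (use assms in auto)

lemma aux_fact: "n > 0 \<Longrightarrow> F > 0 \<Longrightarrow> c / (n * F) * (n * x) = c / F * (x::real)" by (simp add: field_simps)

lemma fact_term: "c / fact (Suc i) * (real (Suc i) * s^i) = c / fact i * (s::real)^i"
proof -
  have f: "(fact (Suc i) :: real) = real (Suc i) * fact i" by (rule fact_Suc)
  show ?thesis unfolding f by (rule aux_fact) auto
qed

lemma taylor_le0:
  fixes f :: "nat \<Rightarrow> real \<Rightarrow> real"
  shows "(\<forall>n t. t \<le> 0 \<longrightarrow> (f n has_real_derivative f (Suc n) t) (at t within {..0})) \<Longrightarrow>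
    (\<forall>t. t \<le> 0 \<longrightarrow> f q t = 0) \<Longrightarrow> t \<le> 0 \<Longrightarrow> f 0 t = (\<Sum>i<q. f i 0 / fact i * t^i)"
proof (induction q arbitrary: f t)
  case 0
  then show ?case by simp
next
  case (Suc q)
  have der: "\<And>n t. t \<le> 0 \<Longrightarrow> (f n has_real_derivative f (Suc n) t) (at t within {..0})"
    using Suc.prems(1) by blast
  have IH: "\<And>t. t \<le> 0 \<Longrightarrow> f 1 t = (\<Sum>i<q. f (Suc i) 0 / fact i * t^i)"
  proof -
    fix t :: real assume "t \<le> 0"
    then show "f 1 t = (\<Sum>i<q. f (Suc i) 0 / fact i * t^i)"
      using Suc.IH[where f="\<lambda>n. f (Suc n)" and t=t] Suc.prems(1,2) by auto
  qed
  define P where "P t = f 0 0 + (\<Sum>i<q. f (Suc i) 0 / fact (Suc i) * t^(Suc i))" for t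
  have dP: "(P has_real_derivative (\<Sum>i<q. f (Suc i) 0 / fact i * s^i)) (at s within {..0})" for s
  proof -
    have "(P has_real_derivative 0 + (\<Sum>i<q. f (Suc i) 0 / fact (Suc i) * (real (Suc i) * s^(Suc i - Suc 0)))) (at s within {..0})"
      unfolding P_def by (intro DERIV_add DERIV_const DERIV_sum DERIV_cmult DERIV_pow)
    moreover have "(\<Sum>i<q. f (Suc i) 0 / fact (Suc i) * (real (Suc i) * s^(Suc i - Suc 0))) = (\<Sum>i<q. f (Suc i) 0 / fact i * s^i)"
      by (rule sum.cong) (use fact_term in auto)
    ultimately show ?thesis by simp
  qed
  have d0: "((\<lambda>s. f 0 s - P s) has_real_derivative 0) (at s within {..0})" if s: "s \<le> 0" for s
  proof -
    have "((\<lambda>s. f 0 s - P s) has_real_derivative f 1 s - (\<Sum>i<q. f (Suc i) 0 / fact i * s^i)) (at s within {..0})"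
      by (intro DERIV_diff dP) (use der[OF s, of 0] in simp)
    then show ?thesis using IH[OF s] by simp
  qed
  obtain c where c: "\<And>s. s \<in> {..0} \<Longrightarrow> f 0 s - P s = c"
    using has_field_derivative_zero_constant[of "{..0::real}" "\<lambda>s. f 0 s - P s"] d0 by auto
  have "c = 0" using c[of 0] unfolding P_def by simp
  have "f 0 t = P t" using c[of t] Suc.prems(3) \<open>c = 0\<close> by simp
  also have "\<dots> = (\<Sum>i<Suc q. f i 0 / fact i * t^i)"
    unfolding P_def by (subst sum.lessThan_Suc_shift) simp
  finally show ?case .
qed




theorem corollary3p2:
  fixes adj :: "'v \<Rightarrow> 'v \<Rightarrow> bool" and w :: "'v \<Rightarrow> 'v \<Rightarrow> real" and m :: "'v \<Rightarrow> real"
    and \<rho> :: "'v \<Rightarrow> 'v \<Rightarrow> real" and x0 :: 'v and \<alpha> C k :: real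
    and u :: "'v \<Rightarrow> real \<Rightarrow> real" and q :: nat
  assumes "weighted_graph adj w m"
    and "intrinsic adj w m \<rho>"
    and "\<forall>x R. finite (ball_rho \<rho> x R)"
    and "\<exists>s. \<forall>x y. adj x y \<longrightarrow> \<rho> x y \<le> s"
    and "\<forall>R>0. vol m (ball_rho \<rho> x0 R) \<le> C * (1 + R) powr \<alpha>"
    and "k > 0"
    and "poly_growth_ancient adj w m \<rho> k u"
    and "4 * real q > 2 * k + \<alpha> + 2"
  shows "(\<forall>D. time_derivs u D \<longrightarrow> (\<forall>x t. t \<le> 0 \<longrightarrow> D q x t = 0)) \<and>
         (\<exists>p :: nat \<Rightarrow> 'v \<Rightarrow> real. \<forall>x t. t \<le> 0 \<longrightarrow> u x t = (\<Sum>i<q. p i x * t ^ i))"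
proof -
  have WG: "wg adj w m \<rho>"
    using assms(1,2) unfolding weighted_graph_def intrinsic_def pseudometric_def
    by unfold_locales auto
  have rnn: "\<And>x y. \<rho> x y \<ge> 0" and rsym: "\<And>x y. \<rho> x y = \<rho> y x"
    and tri: "\<And>x y z. \<rho> x z \<le> \<rho> x y + \<rho> y z"
    using assms(2) unfolding intrinsic_def pseudometric_def by blast+
  obtain s where s: "\<And>x y. adj x y \<Longrightarrow> \<rho> x y \<le> s" using assms(4) by blast
  define s' where "s' = max s 0"
  obtain D' where D'td: "time_derivs u D'"
    and D'1: "\<And>x t. t \<le> 0 \<Longrightarrow> D' 1 x t = laplacian adj w m (\<lambda>y. u y t) x"
    using assms(7) unfolding poly_growth_ancient_def ancient_solution_def by blast
  obtain x1 Cu where grow1: "\<And>R y t. R > 0 \<Longrightarrow> y \<in> ball_rho \<rho> x1 R \<Longrightarrow> - (R^2) \<le> t \<Longrightarrow> t \<le> 0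
      \<Longrightarrow> \<bar>u y t\<bar> \<le> Cu * (1 + R) powr k"
    using assms(7) unfolding poly_growth_ancient_def by blast
  define d where "d = \<rho> x0 x1"
  have d0: "d \<ge> 0" unfolding d_def by (rule rnn)
  define Cu' where "Cu' = Cu * (1 + d) powr k"
  have grow0: "\<bar>u y t\<bar> \<le> Cu' * (1 + R) powr k"
    if R: "R > 0" and y: "y \<in> ball_rho \<rho> x0 R" and t: "- (R^2) \<le> t" "t \<le> 0" for R y t
  proof -
    have y1: "y \<in> ball_rho \<rho> x1 (R + d)"
      using y tri[where x=y and y=x0 and z=x1] unfolding ball_rho_def d_def by auto
    have "R^2 \<le> (R + d)^2" using R d0 by (intro power_mono) auto
    then have t1: "- ((R+d)^2) \<le> t" using t by linarith
    have b: "\<bar>u y t\<bar> \<le> Cu * (1 + (R + d)) powr k"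
      by (rule grow1[OF _ y1 t1 t(2)]) (use R d0 in auto)
    have pk: "(1 + (R + d)) powr k > 0" using R d0 by simp
    have Cu0: "Cu \<ge> 0"
    proof (rule ccontr)
      assume "\<not> Cu \<ge> 0"
      then have "Cu * (1 + (R + d)) powr k < 0" using pk by (simp add: mult_neg_pos)
      then show False using b by linarith
    qed
    have "(1 + (R + d)) powr k \<le> ((1 + d) * (1 + R)) powr k"
      by (rule powr_mono2) (use assms(6) R d0 in \<open>auto simp: algebra_simps\<close>)
    also have "\<dots> = (1 + d) powr k * (1 + R) powr k" by (rule powr_mult)
    finally have "Cu * (1 + (R + d)) powr k \<le> Cu * ((1 + d) powr k * (1 + R) powr k)"
      using Cu0 by (rule mult_left_mono)
    then show ?thesis using b unfolding Cu'_def by (simp add: mult.assoc)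
  qed
  have part1: "\<forall>x t. t \<le> 0 \<longrightarrow> D q x t = 0" if td: "time_derivs u D" for D
  proof -
    have der: "\<And>n x t. t \<le> 0 \<Longrightarrow> (D n x has_real_derivative D (Suc n) x t) (at t within {..0})"
      using td unfolding time_derivs_def by blast
    have D0: "\<And>x t. t \<le> 0 \<Longrightarrow> D 0 x t = u x t" using td unfolding time_derivs_def by blast
    have der': "\<And>n x t. t \<le> 0 \<Longrightarrow> (D' n x has_real_derivative D' (Suc n) x t) (at t within {..0})"
      using D'td unfolding time_derivs_def by blast
    have D'0: "\<And>x t. t \<le> 0 \<Longrightarrow> D' 0 x t = u x t" using D'td unfolding time_derivs_def by blast
    have heatall: "\<forall>x t. t \<le> 0 \<longrightarrow> D (Suc n) x t = laplacian adj w m (\<lambda>y. D n y t) x" for n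
    proof (induction n)
      case 0
      show ?case
      proof (intro allI impI)
        fix x and t :: real assume t: "t \<le> 0"
        have a': "(D' 0 x has_real_derivative D' 1 x t) (at t within {..0})" using der'[OF t, of 0 x] by simp
        have a: "(D 0 x has_real_derivative D 1 x t) (at t within {..0})" using der[OF t, of 0 x] by simp
        have b: "(D 0 x has_real_derivative D' 1 x t) (at t within {..0})"
          by (rule deriv_transform_le0[OF a' t]) (simp add: D0 D'0)
        have "D 1 x t = D' 1 x t" by (rule deriv_unique_le0[OF t a b])
        also have "\<dots> = laplacian adj w m (\<lambda>y. u y t) x" by (rule D'1[OF t])
        also have "(\<lambda>y. u y t) = (\<lambda>y. D 0 y t)" using D0[OF t] by auto
        finally show "D (Suc 0) x t = laplacian adj w m (\<lambda>y. D 0 y t) x" by simp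
      qed
    next
      case (Suc n)
      show ?case
      proof (intro allI impI)
        fix x and t :: real assume t: "t \<le> 0"
        have g: "((\<lambda>s. laplacian adj w m (\<lambda>y. D n y s) x) has_real_derivative
            laplacian adj w m (\<lambda>y. D (Suc n) y t) x) (at t within {..0})"
          unfolding laplacian_def by (intro DERIV_sum DERIV_cmult DERIV_diff der t)
        have h: "(D (Suc n) x has_real_derivative laplacian adj w m (\<lambda>y. D (Suc n) y t) x) (at t within {..0})"
          by (rule deriv_transform_le0[OF g t]) (use Suc.IH in auto)
        show "D (Suc (Suc n)) x t = laplacian adj w m (\<lambda>y. D (Suc n) y t) x"
          by (rule deriv_unique_le0[OF t der[OF t] h])
      qed
    qed
    have heat: "\<And>n x t. t \<le> 0 \<Longrightarrow> D (Suc n) x t = laplacian adj w m (\<lambda>y. D n y t) x"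
      using heatall by blast
    interpret wgs adj w m \<rho> D x0 s'
    proof (rule wgs.intro[OF WG], unfold_locales)
      show "\<And>n x t. t \<le> 0 \<Longrightarrow> (D n x has_real_derivative D (Suc n) x t) (at t within {..0})" by (rule der)
      show "\<And>n x t. t \<le> 0 \<Longrightarrow> D (Suc n) x t = laplacian adj w m (\<lambda>y. D n y t) x" by (rule heat)
      show "\<And>x y z. \<rho> x z \<le> \<rho> x y + \<rho> y z" by (rule tri)
      show "\<And>R. finite (ball_rho \<rho> x0 R)" using assms(3) by blast
      show "\<And>x y. adj x y \<Longrightarrow> \<rho> x y \<le> s'" using s unfolding s'_def by (meson max.coboundedI1)
      show "0 \<le> s'" unfolding s'_def by simp
    qed
    show ?thesis
    proof (intro allI impI)
      fix x t assume t: "(t::real) \<le> 0"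
      show "D q x t = 0"
      proof (rule vanish[where Cu=Cu' and C=C and k=k and \<alpha>=\<alpha>])
        show "\<bar>D 0 y t\<bar> \<le> Cu' * (1 + R) powr k"
          if "R > 0" "y \<in> ball_rho \<rho> x0 R" "- (R^2) \<le> t" "t \<le> 0" for R y t
          using grow0[OF that] D0[OF that(4)] by simp
        show "vol m (ball_rho \<rho> x0 R) \<le> C * (1 + R) powr \<alpha>" if "R > 0" for R
          using assms(5) that by blast
      qed (use assms(6,8) t in auto)
    qed
  qed
  have p1: "\<forall>D. time_derivs u D \<longrightarrow> (\<forall>x t. t \<le> 0 \<longrightarrow> D q x t = 0)" using part1 by blast
  have "\<forall>x t. t \<le> 0 \<longrightarrow> u x t = (\<Sum>i<q. (D' i x 0 / fact i) * t ^ i)"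
  proof (intro allI impI)
    fix x t assume t: "(t::real) \<le> 0"
    have "D' 0 x t = (\<Sum>i<q. D' i x 0 / fact i * t ^ i)"
    proof (rule taylor_le0[where f="\<lambda>n. D' n x"])
      show "\<forall>n t. t \<le> 0 \<longrightarrow> (D' n x has_real_derivative D' (Suc n) x t) (at t within {..0})"
        using D'td unfolding time_derivs_def by blast
      show "\<forall>t. t \<le> 0 \<longrightarrow> D' q x t = 0" using part1[OF D'td] by blast
    qed (rule t)
    then show "u x t = (\<Sum>i<q. (D' i x 0 / fact i) * t ^ i)"
      using D'td t unfolding time_derivs_def by simp
  qed
  then have "\<exists>p :: nat \<Rightarrow> 'v \<Rightarrow> real. \<forall>x t. t \<le> 0 \<longrightarrow> u x t = (\<Sum>i<q. p i x * t ^ i)"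
    by (intro exI[where x="\<lambda>i x. D' i x 0 / fact i"])
  then show ?thesis using p1 by blast
qed


end
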